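(* Let $T$ be a doubled graph with good partition $(X,Y)$. (1) If $\{y\}$ is an anticomponent of size one of $T|Y$ and $y$ has an antineighbor $x\in X$, then $\{x,y\}$ is an even pair of $T$; in particular, if in addition $T|X$ has an edge $x_1x_2$, then one of $\{x_1,y\}$, $\{x_2,y\}$ is an even pair, so $T$ has an even pair. (2) If $T|Y$ has a strong antiedge $y_1y_2$ and $T|X$ has no edge, then $\{y_1,y_2\}$ is an even pair of $T$.
   Context: A trigraph $T$ consists of a finite set $V(T)$ and a map $\theta:\binom{V(T)}{2}\to\{-1,0,1\}$. Two distinct vertices $u,v$ are strongly adjacent if $\theta(uv)=1$, strongly antiadjacent if $\theta(uv)=-1$, and semiadjacent (a switchable pair) if $\theta(uv)=0$; they are adjacent if $\theta(uv)\in\{0,1\}$ and antiadjacent if $\theta(uv)\in\{0,-1\}$; an antineighbor of $v$ is a vertex antiadjacent to $v$. An edge (antiedge) is an adjacent (antiadjacent) pair; a strong edge (strong antiedge) is a strongly adjacent (strongly antiadjacent) pair. For $X\subseteq V(T)$, $T|X$ is the trigraph on $X$ with $\theta$ restricted. A set $X$ is connected if the graph on $X$ whose edges are the adjacent pairs is connected, and anticonnected if the graph on $X$ whose edges are the antiadjacent pairs is connected; components (anticomponents) are maximal connected (anticonnected) subsets. A path is a sequence of distinct vertices $p_1,\dots,p_k$ such that $p_i,p_j$ are adjacent when $|i-j|=1$ and antiadjacent when $|i-j|>1$; its length is $k-1$. An even pair of $T$ is a strongly antiadjacent pair $\{u,v\}$ such that every path from $u$ to $v$ in $T$ has even length. A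 good partition of $T$ is a partition $(X,Y)$ of $V(T)$ such that every component of $T|X$ and every anticomponent of $T|Y$ has at most two vertices, no switchable pair has one end in $X$ and the other in $Y$, and for every component $C_x$ of $T|X$ and every anticomponent $C_y$ of $T|Y$, every vertex of $C_x\cup C_y$ is incident with at most one strong edge and at most one strong antiedge between $C_x$ and $C_y$. $T$ is a doubled graph if it has a good partition. *)

theory Defs
  imports Main
begin

definition trigraph :: "'a set \<Rightarrow> ('a \<Rightarrow> 'a \<Rightarrow> int) \<Rightarrow> bool" where
  "trigraph V \<theta> \<longleftrightarrow> finite V \<and>
     (\<forall>u\<in>V. \<forall>v\<in>V. u \<noteq> v \<longrightarrow> \<theta> u v = \<theta> v u \<and> \<theta> u v \<in> {-1, 0, 1})"

definition strongly_adjacent :: "('a \<Rightarrow> 'a \<Rightarrow> int) \<Rightarrow> 'a \<Rightarrow> 'a \<Rightarrow> bool" where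
  "strongly_adjacent \<theta> u v \<longleftrightarrow> u \<noteq> v \<and> \<theta> u v = 1"

definition strongly_antiadjacent :: "('a \<Rightarrow> 'a \<Rightarrow> int) \<Rightarrow> 'a \<Rightarrow> 'a \<Rightarrow> bool" where
  "strongly_antiadjacent \<theta> u v \<longleftrightarrow> u \<noteq> v \<and> \<theta> u v = -1"

definition semiadjacent :: "('a \<Rightarrow> 'a \<Rightarrow> int) \<Rightarrow> 'a \<Rightarrow> 'a \<Rightarrow> bool" where
  "semiadjacent \<theta> u v \<longleftrightarrow> u \<noteq> v \<and> \<theta> u v = 0"

definition adjacent :: "('a \<Rightarrow> 'a \<Rightarrow> int) \<Rightarrow> 'a \<Rightarrow> 'a \<Rightarrow> bool" where
  "adjacent \<theta> u v \<longleftrightarrow> u \<noteq> v \<and> \<theta> u v \<in> {0, 1}"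

definition antiadjacent :: "('a \<Rightarrow> 'a \<Rightarrow> int) \<Rightarrow> 'a \<Rightarrow> 'a \<Rightarrow> bool" where
  "antiadjacent \<theta> u v \<longleftrightarrow> u \<noteq> v \<and> \<theta> u v \<in> {0, -1}"

definition connected_wrt :: "('a \<Rightarrow> 'a \<Rightarrow> bool) \<Rightarrow> 'a set \<Rightarrow> bool" where
  "connected_wrt R X \<longleftrightarrow>
     (\<forall>u\<in>X. \<forall>v\<in>X. (\<lambda>a b. a \<in> X \<and> b \<in> X \<and> R a b)\<^sup>*\<^sup>* u v)"

definition component_wrt :: "('a \<Rightarrow> 'a \<Rightarrow> bool) \<Rightarrow> 'a set \<Rightarrow> 'a set \<Rightarrow> bool" where
  "component_wrt R X C \<longleftrightarrow> C \<noteq> {} \<and> C \<subseteq> X \<and> connected_wrt R C \<and>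
     (\<forall>C'. C \<subseteq> C' \<and> C' \<subseteq> X \<and> connected_wrt R C' \<longrightarrow> C' = C)"

definition component :: "('a \<Rightarrow> 'a \<Rightarrow> int) \<Rightarrow> 'a set \<Rightarrow> 'a set \<Rightarrow> bool" where
  "component \<theta> X C \<longleftrightarrow> component_wrt (adjacent \<theta>) X C"

definition anticomponent :: "('a \<Rightarrow> 'a \<Rightarrow> int) \<Rightarrow> 'a set \<Rightarrow> 'a set \<Rightarrow> bool" where
  "anticomponent \<theta> X C \<longleftrightarrow> component_wrt (antiadjacent \<theta>) X C"

definition is_path :: "'a set \<Rightarrow> ('a \<Rightarrow> 'a \<Rightarrow> int) \<Rightarrow> 'a list \<Rightarrow> bool" where
  "is_path V \<theta> ps \<longleftrightarrow> ps \<noteq> [] \<and> distinct ps \<and> set ps \<subseteq> V \<and>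
     (\<forall>i j. i < length ps \<and> j < length ps \<longrightarrow>
        ((i + 1 = j \<or> j + 1 = i) \<longrightarrow> adjacent \<theta> (ps ! i) (ps ! j)) \<and>
        ((i + 1 < j \<or> j + 1 < i) \<longrightarrow> antiadjacent \<theta> (ps ! i) (ps ! j)))"

definition even_pair :: "'a set \<Rightarrow> ('a \<Rightarrow> 'a \<Rightarrow> int) \<Rightarrow> 'a \<Rightarrow> 'a \<Rightarrow> bool" where
  "even_pair V \<theta> u v \<longleftrightarrow> u \<in> V \<and> v \<in> V \<and> strongly_antiadjacent \<theta> u v \<and>
     (\<forall>ps. is_path V \<theta> ps \<and> hd ps = u \<and> last ps = v \<longrightarrow> even (length ps - 1))"

definition good_partition :: "'a set \<Rightarrow> ('a \<Rightarrow> 'a \<Rightarrow> int) \<Rightarrow> 'a set \<Rightarrow> 'a set \<Rightarrow> bool" where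
  "good_partition V \<theta> X Y \<longleftrightarrow>
     X \<inter> Y = {} \<and> X \<union> Y = V \<and>
     (\<forall>C. component \<theta> X C \<longrightarrow> card C \<le> 2) \<and>
     (\<forall>C. anticomponent \<theta> Y C \<longrightarrow> card C \<le> 2) \<and>
     (\<forall>x\<in>X. \<forall>y\<in>Y. \<not> semiadjacent \<theta> x y) \<and>
     (\<forall>Cx Cy. component \<theta> X Cx \<and> anticomponent \<theta> Y Cy \<longrightarrow>
        (\<forall>w\<in>Cx \<union> Cy.
           card {z \<in> Cx \<union> Cy. ((w \<in> Cx \<and> z \<in> Cy) \<or> (w \<in> Cy \<and> z \<in> Cx)) \<and>
                                strongly_adjacent \<theta> w z} \<le> 1 \<and>
           card {z \<in> Cx \<union> Cy. ((w \<in> Cx \<and> z \<in> Cy) \<or> (w \<in> Cy \<and> z \<in> Cx)) \<and>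
                                strongly_antiadjacent \<theta> w z} \<le> 1))"

definition doubled_graph :: "'a set \<Rightarrow> ('a \<Rightarrow> 'a \<Rightarrow> int) \<Rightarrow> bool" where
  "doubled_graph V \<theta> \<longleftrightarrow> trigraph V \<theta> \<and> (\<exists>X Y. good_partition V \<theta> X Y)"

end

theory Submission imports Defs begin


lemma reach_component:
  assumes sym: "\<And>u v. u\<in>X \<Longrightarrow> v\<in>X \<Longrightarrow> R u v \<Longrightarrow> R v u" and a: "a \<in> X"
  shows "component_wrt R X {v. (\<lambda>u w. u\<in>X \<and> w\<in>X \<and> R u w)\<^sup>*\<^sup>* a v}"
    (is "component_wrt R X ?C")
proof -
  let ?r = "\<lambda>u w. u\<in>X \<and> w\<in>X \<and> R u w"
  have sub: "?C \<subseteq> X"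
  proof
    fix v assume "v \<in> ?C"
    then have "?r\<^sup>*\<^sup>* a v" by simp
    then show "v \<in> X" by (induction rule: rtranclp_induct) (auto simp: a)
  qed
  let ?s = "\<lambda>u w. u\<in>?C \<and> w\<in>?C \<and> R u w"
  have fromA: "?s\<^sup>*\<^sup>* a v" if "v \<in> ?C" for v
  proof -
    from that have "?r\<^sup>*\<^sup>* a v" by simp
    then show ?thesis
    proof (induction rule: rtranclp_induct)
      case base then show ?case by simp
    next
      case (step w v)
      have "w \<in> ?C" using step(1) by simp
      moreover have "v \<in> ?C" using step(1,2) by (simp add: rtranclp.rtrancl_into_rtrancl)
      ultimately have "?s w v" using step(2) by simp
      then show ?case using step(3) by (simp add: rtranclp.rtrancl_into_rtrancl)
    qed
  qed
  have ssym: "?s\<^sup>*\<^sup>* v u" if "?s\<^sup>*\<^sup>* u v" for u v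
    using that
  proof (induction rule: rtranclp_induct)
    case base then show ?case by simp
  next
    case (step w z)
    have zw: "?s z w" using step(2) sub sym by blast
    show ?case by (rule converse_rtranclp_into_rtranclp[where r="?s", OF zw step(3)])
  qed
  have conn: "connected_wrt R ?C"
    unfolding connected_wrt_def
  proof (intro ballI)
    fix u v assume u: "u \<in> ?C" and v: "v \<in> ?C"
    have "?s\<^sup>*\<^sup>* u a" by (rule ssym[OF fromA[OF u]])
    then show "?s\<^sup>*\<^sup>* u v" using fromA[OF v] by (rule rtranclp_trans)
  qed
  have aC: "a \<in> ?C" by simp
  show ?thesis
    unfolding component_wrt_def
  proof (intro conjI allI impI)
    show "?C \<noteq> {}" using aC by blast
    show "?C \<subseteq> X" by (rule sub)
    show "connected_wrt R ?C" by (rule conn)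
    fix C' assume h: "?C \<subseteq> C' \<and> C' \<subseteq> X \<and> connected_wrt R C'"
    have "C' \<subseteq> ?C"
    proof
      fix v assume v: "v \<in> C'"
      have "(\<lambda>a b. a \<in> C' \<and> b \<in> C' \<and> R a b)\<^sup>*\<^sup>* a v"
        using h v aC unfolding connected_wrt_def by blast
      then have "?r\<^sup>*\<^sup>* a v"
        by (rule rtranclp_mono[THEN predicate2D, rotated]) (use h in auto)
      then show "v \<in> ?C" by simp
    qed
    then show "C' = ?C" using h by blast
  qed
qed

lemma three_bad:
  assumes sym: "\<And>u v. u\<in>X \<Longrightarrow> v\<in>X \<Longrightarrow> R u v \<Longrightarrow> R v u" and fin: "finite X"
    and bound: "\<forall>C. component_wrt R X C \<longrightarrow> card C \<le> 2"
    and abc: "a \<in> X" "b \<in> X" "c \<in> X" "a \<noteq> b" "b \<noteq> c" "a \<noteq> c"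
    and r: "R a b" "R b c"
  shows False
proof -
  let ?C = "{v. (\<lambda>u w. u\<in>X \<and> w\<in>X \<and> R u w)\<^sup>*\<^sup>* b v}"
  have comp: "component_wrt R X ?C" by (rule reach_component[OF sym abc(2)])
  have "?C \<subseteq> X" using comp unfolding component_wrt_def by blast
  then have finC: "finite ?C" using fin finite_subset by blast
  have "R b a" using sym abc r by blast
  then have "{a,b,c} \<subseteq> ?C" using abc r by auto
  then have "card {a,b,c} \<le> card ?C" using finC card_mono by blast
  moreover have "card {a,b,c} = 3" using abc by auto
  moreover have "card ?C \<le> 2" using bound comp by blast
  ultimately show False by simp
qed

theorem proposition4p10:
  fixes V :: "'a set" and \<theta> :: "'a \<Rightarrow> 'a \<Rightarrow> int" and X Y :: "'a set"
  assumes "doubled_graph V \<theta>"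
    and "good_partition V \<theta> X Y"
  shows "(\<forall>x y. anticomponent \<theta> Y {y} \<and> x \<in> X \<and> antiadjacent \<theta> x y
              \<longrightarrow> even_pair V \<theta> x y)
       \<and> (\<forall>x1 x2 y. anticomponent \<theta> Y {y} \<and> x1 \<in> X \<and> x2 \<in> X \<and> adjacent \<theta> x1 x2
              \<longrightarrow> (even_pair V \<theta> x1 y \<or> even_pair V \<theta> x2 y) \<and>
                  (\<exists>u v. even_pair V \<theta> u v))
       \<and> (\<forall>y1 y2. y1 \<in> Y \<and> y2 \<in> Y \<and> strongly_antiadjacent \<theta> y1 y2 \<and>
                 (\<forall>a\<in>X. \<forall>b\<in>X. \<not> adjacent \<theta> a b)
              \<longrightarrow> even_pair V \<theta> y1 y2)"
proof -
  have tg: "trigraph V \<theta>" using assms(1) unfolding doubled_graph_def by blast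
  have finV: "finite V" using tg unfolding trigraph_def by blast
  have symV: "\<And>u v. u \<in> V \<Longrightarrow> v \<in> V \<Longrightarrow> u \<noteq> v \<Longrightarrow> \<theta> u v = \<theta> v u"
    using tg unfolding trigraph_def by blast
  have valV: "\<And>u v. u \<in> V \<Longrightarrow> v \<in> V \<Longrightarrow> u \<noteq> v \<Longrightarrow> \<theta> u v \<in> {-1,0,1}"
    using tg unfolding trigraph_def by blast
  note gp = assms(2)[unfolded good_partition_def]
  note g1 = gp[THEN conjunct1] and g2 = gp[THEN conjunct2, THEN conjunct1]
    and g3 = gp[THEN conjunct2, THEN conjunct2, THEN conjunct1]
    and g4 = gp[THEN conjunct2, THEN conjunct2, THEN conjunct2, THEN conjunct1]
    and g5 = gp[THEN conjunct2, THEN conjunct2, THEN conjunct2, THEN conjunct2, THEN conjunct1]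
    and g6 = gp[THEN conjunct2, THEN conjunct2, THEN conjunct2, THEN conjunct2, THEN conjunct2]
  have disj: "X \<inter> Y = {}" by (rule g1)
  have un: "X \<union> Y = V" by (rule g2)
  have cb: "\<forall>C. component_wrt (adjacent \<theta>) X C \<longrightarrow> card C \<le> 2"
    using g3 unfolding component_def .
  have acb: "\<forall>C. component_wrt (antiadjacent \<theta>) Y C \<longrightarrow> card C \<le> 2"
    using g4 unfolding anticomponent_def .
  have ns: "\<forall>x\<in>X. \<forall>y\<in>Y. \<not> semiadjacent \<theta> x y" by (rule g5)
  have nosemi: "\<theta> x y \<noteq> 0 \<and> \<theta> y x \<noteq> 0" if "x \<in> X" "y \<in> Y" for x y
  proof -
    have "x \<noteq> y" "x \<in> V" "y \<in> V" using that disj un by blast+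
    moreover have "\<not> semiadjacent \<theta> x y" using ns that by blast
    ultimately show ?thesis using symV[of x y] unfolding semiadjacent_def by auto
  qed
  have ec: "\<And>Cx Cy w. component \<theta> X Cx \<Longrightarrow> anticomponent \<theta> Y Cy \<Longrightarrow> w \<in> Cx \<union> Cy \<Longrightarrow>
           card {z \<in> Cx \<union> Cy. ((w \<in> Cx \<and> z \<in> Cy) \<or> (w \<in> Cy \<and> z \<in> Cx)) \<and>
                                strongly_adjacent \<theta> w z} \<le> 1 \<and>
           card {z \<in> Cx \<union> Cy. ((w \<in> Cx \<and> z \<in> Cy) \<or> (w \<in> Cy \<and> z \<in> Cx)) \<and>
                                strongly_antiadjacent \<theta> w z} \<le> 1"
    using g6 by blast
  have XV: "X \<subseteq> V" and YV: "Y \<subseteq> V" using un by blast+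
  have adjsym: "adjacent \<theta> v u" if "u \<in> X" "v \<in> X" "adjacent \<theta> u v" for u v
  proof -
    have "u \<in> V" "v \<in> V" using that XV by blast+
    then show ?thesis using that symV[of u v] unfolding adjacent_def by auto
  qed
  have antisym: "antiadjacent \<theta> v u" if "u \<in> Y" "v \<in> Y" "antiadjacent \<theta> u v" for u v
  proof -
    have "u \<in> V" "v \<in> V" using that YV by blast+
    then show ?thesis using that symV[of u v] unfolding antiadjacent_def by auto
  qed
  have noY3: False if "a \<in> Y" "b \<in> Y" "c \<in> Y" "a \<noteq> b" "b \<noteq> c" "a \<noteq> c"
    "antiadjacent \<theta> a b" "antiadjacent \<theta> b c" for a b c
    by (rule three_bad[OF antisym _ acb that]) (use finV YV finite_subset in auto)
  have pairbad: False if a: "a \<in> X" "b \<in> X" "adjacent \<theta> a b" and y: "anticomponent \<theta> Y {y}"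
     and v: "(\<theta> y a = -1 \<and> \<theta> y b = -1) \<or> (\<theta> y a = 1 \<and> \<theta> y b = 1)" for a b y
  proof -
    have "\<exists>C. component \<theta> X C \<and> a \<in> C \<and> b \<in> C"
    proof (intro exI conjI)
      show "component \<theta> X {v. (\<lambda>u w. u\<in>X \<and> w\<in>X \<and> adjacent \<theta> u w)\<^sup>*\<^sup>* a v}"
        unfolding component_def by (rule reach_component[OF adjsym a(1)])
      show "a \<in> {v. (\<lambda>u w. u\<in>X \<and> w\<in>X \<and> adjacent \<theta> u w)\<^sup>*\<^sup>* a v}" by simp
      have "(\<lambda>u w. u\<in>X \<and> w\<in>X \<and> adjacent \<theta> u w)\<^sup>*\<^sup>* a b"
        by (rule r_into_rtranclp) (use a in simp)
      then show "b \<in> {v. (\<lambda>u w. u\<in>X \<and> w\<in>X \<and> adjacent \<theta> u w)\<^sup>*\<^sup>* a v}" by simp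
    qed
    then obtain C where comp: "component \<theta> X C" and aC: "a \<in> C" and bC: "b \<in> C" by blast
    have CX: "C \<subseteq> X" using comp[unfolded component_def component_wrt_def, THEN conjunct2, THEN conjunct1] .
    have finC: "finite C" by (rule finite_subset[OF CX finite_subset[OF XV finV]])
    have yY: "y \<in> Y" using y[unfolded anticomponent_def component_wrt_def, THEN conjunct2, THEN conjunct1] by simp
    have yC: "y \<notin> C" using CX yY disj by blast
    have ab: "a \<noteq> b" using a unfolding adjacent_def by blast
    have ya: "y \<noteq> a" "y \<noteq> b" using a yY disj by blast+
    have yCy: "y \<in> C \<union> {y}" by simp
    note E = ec[OF comp y yCy]
    have finCy: "finite (C \<union> {y})" using finC by simp
    from v show False
    proof
      assume h: "\<theta> y a = -1 \<and> \<theta> y b = -1"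
      let ?S = "{z \<in> C \<union> {y}. ((y \<in> C \<and> z \<in> {y}) \<or> (y \<in> {y} \<and> z \<in> C)) \<and>
                                strongly_antiadjacent \<theta> y z}"
      have s: "strongly_antiadjacent \<theta> y a" "strongly_antiadjacent \<theta> y b"
        using h ya unfolding strongly_antiadjacent_def by auto
      have "{a,b} \<subseteq> ?S" using aC bC s by blast
      moreover have "finite ?S" by (rule finite_subset[OF _ finCy]) blast
      ultimately have "card {a,b} \<le> card ?S" by (rule card_mono[rotated])
      then show False using E ab by simp
    next
      assume h: "\<theta> y a = 1 \<and> \<theta> y b = 1"
      let ?S = "{z \<in> C \<union> {y}. ((y \<in> C \<and> z \<in> {y}) \<or> (y \<in> {y} \<and> z \<in> C)) \<and>
                                strongly_adjacent \<theta> y z}"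
      have s: "strongly_adjacent \<theta> y a" "strongly_adjacent \<theta> y b"
        using h ya unfolding strongly_adjacent_def by auto
      have "{a,b} \<subseteq> ?S" using aC bC s by blast
      moreover have "finite ?S" by (rule finite_subset[OF _ finCy]) blast
      ultimately have "card {a,b} \<le> card ?S" by (rule card_mono[rotated])
      then show False using E ab by simp
    qed
  qed
  have part1: "even_pair V \<theta> x y" if y: "anticomponent \<theta> Y {y}" and x: "x \<in> X"
     and xy: "antiadjacent \<theta> x y" for x y
  proof -
    have yY: "y \<in> Y" using y[unfolded anticomponent_def component_wrt_def, THEN conjunct2, THEN conjunct1] by simp
    have single: "\<theta> y w = 1" if w: "w \<in> Y" "w \<noteq> y" for w
    proof (rule ccontr)
      assume ne: "\<theta> y w \<noteq> 1"
      have "\<theta> y w \<in> {-1,0,1}" using valV w yY YV by blast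
      then have an: "antiadjacent \<theta> y w" using ne w unfolding antiadjacent_def by auto
      then have an2: "antiadjacent \<theta> w y" using antisym w yY by blast
      have conn: "connected_wrt (antiadjacent \<theta>) {y,w}"
        unfolding connected_wrt_def using an an2 by (auto intro: r_into_rtranclp)
      note mx = y[unfolded anticomponent_def component_wrt_def, THEN conjunct2, THEN conjunct2, THEN conjunct2]
      have "{y} \<subseteq> {y,w} \<and> {y,w} \<subseteq> Y \<and> connected_wrt (antiadjacent \<theta>) {y,w}"
        using conn yY w by simp
      then have "{y,w} = {y}" using mx by blast
      then show False using w by blast
    qed
    have xyne: "x \<noteq> y" and xV: "x \<in> V" and yV: "y \<in> V" using x yY disj un by blast+
    have txy: "\<theta> x y = -1" using xy nosemi[OF x yY] unfolding antiadjacent_def by auto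
    have tyx: "\<theta> y x = -1" using txy symV[OF xV yV xyne] by simp
    show ?thesis unfolding even_pair_def
    proof (intro conjI allI impI)
      show "x \<in> V" "y \<in> V" by fact+
      show "strongly_antiadjacent \<theta> x y" using txy xyne unfolding strongly_antiadjacent_def by blast
      fix ps assume "is_path V \<theta> ps \<and> hd ps = x \<and> last ps = y"
      then have pp: "is_path V \<theta> ps" and hx: "hd ps = x" and ly: "last ps = y" by auto
      define n where "n = length ps"
      have ne: "ps \<noteq> []" and di: "distinct ps" and sV: "set ps \<subseteq> V" using pp unfolding is_path_def by auto
      have P: "\<And>i j. i<n \<Longrightarrow> j<n \<Longrightarrow> i+1=j \<Longrightarrow> adjacent \<theta> (ps!i) (ps!j)"
        using pp unfolding is_path_def n_def by blast
      have A: "\<And>i j. i<n \<Longrightarrow> j<n \<Longrightarrow> i+1<j \<Longrightarrow> antiadjacent \<theta> (ps!i) (ps!j)"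
        using pp unfolding is_path_def n_def by blast
      have inV: "\<And>i. i<n \<Longrightarrow> ps!i \<in> V" using sV n_def by auto
      have h0: "ps!0 = x" using hx ne by (simp add: hd_conv_nth)
      have hl: "ps!(n-1) = y" using ly ne n_def by (simp add: last_conv_nth)
      have npos: "n > 0" using ne n_def by simp
      have dist: "\<And>i j. i<n \<Longrightarrow> j<n \<Longrightarrow> ps!i = ps!j \<Longrightarrow> i = j"
        using di n_def by (simp add: nth_eq_iff_index_eq)
      have n2: "n \<ge> 2"
      proof (rule ccontr)
        assume "\<not> n \<ge> 2" then have "n = 1" using npos by simp
        then show False using h0 hl xyne by simp
      qed
      have n3: "n \<noteq> 2"
      proof
        assume "n = 2"
        then have "adjacent \<theta> (ps!0) (ps!1)" using P by simp
        then show False using h0 hl \<open>n=2\<close> txy unfolding adjacent_def by simp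
      qed
      have inX: "ps!i \<in> X" if i: "i+2 < n" for i
      proof (rule ccontr)
        assume "ps!i \<notin> X"
        moreover have "i < n" using i by simp
        ultimately have iY: "ps!i \<in> Y" using inV un by blast
        have "ps!i \<noteq> y" using dist[of i "n-1"] hl i by auto
        then have t1: "\<theta> y (ps!i) = 1" using single iY by blast
        have "antiadjacent \<theta> (ps!i) (ps!(n-1))" using A i by simp
        then have "antiadjacent \<theta> y (ps!i)" using antisym iY yY hl by auto
        then show False using t1 unfolding antiadjacent_def by simp
      qed
      have n4: "\<not> n \<ge> 4"
      proof
        assume n4: "n \<ge> 4"
        have X0: "ps!0 \<in> X" and X1: "ps!1 \<in> X" using inX n4 by auto
        have ad: "adjacent \<theta> (ps!0) (ps!1)" using P n4 by simp
        have a0: "antiadjacent \<theta> (ps!0) y" and a1: "antiadjacent \<theta> (ps!1) y"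
          using A[of 0 "n-1"] A[of 1 "n-1"] n4 hl by auto
        have ne0: "ps!0 \<noteq> y" "ps!1 \<noteq> y" using X0 X1 yY disj by blast+
        have "\<theta> (ps!0) y = -1" "\<theta> (ps!1) y = -1"
          using a0 a1 nosemi[OF X0 yY] nosemi[OF X1 yY] unfolding antiadjacent_def by auto
        then have "\<theta> y (ps!0) = -1" "\<theta> y (ps!1) = -1"
          using symV[of "ps!0" y] symV[of "ps!1" y] ne0 X0 X1 XV yV by auto
        then show False using pairbad[OF X0 X1 ad y] by blast
      qed
      have "n = 3" using n2 n3 n4 by simp
      then show "even (length ps - 1)" using n_def by simp
    qed
  qed
  have part2: "(even_pair V \<theta> x1 y \<or> even_pair V \<theta> x2 y) \<and> (\<exists>u v. even_pair V \<theta> u v)"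
    if y: "anticomponent \<theta> Y {y}" and x: "x1 \<in> X" "x2 \<in> X" and ad: "adjacent \<theta> x1 x2" for x1 x2 y
  proof -
    have yY: "y \<in> Y" using y[unfolded anticomponent_def component_wrt_def, THEN conjunct2, THEN conjunct1] by simp
    have ne: "y \<noteq> x1" "y \<noteq> x2" using x yY disj by blast+
    have v1: "\<theta> y x1 \<in> {-1,1}" using valV[of y x1] nosemi[OF x(1) yY] ne x yY XV YV by auto
    have v2: "\<theta> y x2 \<in> {-1,1}" using valV[of y x2] nosemi[OF x(2) yY] ne x yY XV YV by auto
    have "\<theta> y x1 = -1 \<or> \<theta> y x2 = -1"
    proof (rule ccontr)
      assume "\<not> ?thesis"
      then have "\<theta> y x1 = 1 \<and> \<theta> y x2 = 1" using v1 v2 by auto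
      then show False using pairbad[OF x ad y] by blast
    qed
    moreover have "x1 \<in> V" "x2 \<in> V" "y \<in> V" using x yY XV YV by blast+
    ultimately have "antiadjacent \<theta> x1 y \<or> antiadjacent \<theta> x2 y"
      using symV[of y x1] symV[of y x2] ne unfolding antiadjacent_def by auto
    then have "even_pair V \<theta> x1 y \<or> even_pair V \<theta> x2 y" using part1 y x by blast
    then show ?thesis by blast
  qed
  have part3: "even_pair V \<theta> y1 y2" if y: "y1 \<in> Y" "y2 \<in> Y" and sa: "strongly_antiadjacent \<theta> y1 y2"
     and noe: "\<forall>a\<in>X. \<forall>b\<in>X. \<not> adjacent \<theta> a b" for y1 y2
  proof -
    have yne: "y1 \<noteq> y2" and t: "\<theta> y1 y2 = -1" using sa unfolding strongly_antiadjacent_def by auto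
    have a12: "antiadjacent \<theta> y1 y2" using yne t unfolding antiadjacent_def by simp
    have a21: "antiadjacent \<theta> y2 y1" using antisym y a12 by blast
    show ?thesis unfolding even_pair_def
    proof (intro conjI allI impI)
      show "y1 \<in> V" "y2 \<in> V" using y YV by blast+
      show "strongly_antiadjacent \<theta> y1 y2" by fact
      fix ps assume "is_path V \<theta> ps \<and> hd ps = y1 \<and> last ps = y2"
      then have pp: "is_path V \<theta> ps" and hx: "hd ps = y1" and ly: "last ps = y2" by auto
      define n where "n = length ps"
      have ne: "ps \<noteq> []" and di: "distinct ps" and sV: "set ps \<subseteq> V" using pp unfolding is_path_def by auto
      have P: "\<And>i j. i<n \<Longrightarrow> j<n \<Longrightarrow> i+1=j \<Longrightarrow> adjacent \<theta> (ps!i) (ps!j)"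
        using pp unfolding is_path_def n_def by blast
      have A: "\<And>i j. i<n \<Longrightarrow> j<n \<Longrightarrow> i+1<j \<Longrightarrow> antiadjacent \<theta> (ps!i) (ps!j)"
        using pp unfolding is_path_def n_def by blast
      have inV: "\<And>i. i<n \<Longrightarrow> ps!i \<in> V" using sV n_def by auto
      have h0: "ps!0 = y1" using hx ne by (simp add: hd_conv_nth)
      have hl: "ps!(n-1) = y2" using ly ne n_def by (simp add: last_conv_nth)
      have npos: "n > 0" using ne n_def by simp
      have dist: "\<And>i j. i<n \<Longrightarrow> j<n \<Longrightarrow> ps!i = ps!j \<Longrightarrow> i = j"
        using di n_def by (simp add: nth_eq_iff_index_eq)
      have n2: "n \<ge> 2"
      proof (rule ccontr)
        assume "\<not> n \<ge> 2" then have "n = 1" using npos by simp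
        then show False using h0 hl yne by simp
      qed
      have n3: "n \<noteq> 2"
      proof
        assume "n = 2"
        then have "adjacent \<theta> (ps!0) (ps!1)" using P by simp
        then show False using h0 hl \<open>n=2\<close> t unfolding adjacent_def by simp
      qed
      have n4: "\<not> n \<ge> 4"
      proof
        assume n4: "n \<ge> 4"
        have l: "1 < n" "2 < n" "0 < n" "n - 1 < n" using n4 by auto
        have d1: "ps!1 \<noteq> y1" "ps!1 \<noteq> y2" "ps!2 \<noteq> y1" "ps!2 \<noteq> y2"
        proof -
          show "ps!1 \<noteq> y1" using dist[OF l(1) l(3)] h0 by auto
          show "ps!2 \<noteq> y1" using dist[OF l(2) l(3)] h0 by auto
          have "1 \<noteq> n - 1" "2 \<noteq> n - 1" using n4 by auto
          then show "ps!1 \<noteq> y2" "ps!2 \<noteq> y2" using dist[OF l(1) l(4)] dist[OF l(2) l(4)] hl by auto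
        qed
        show False
        proof (cases "ps!1 \<in> Y")
          case True
          have "antiadjacent \<theta> (ps!1) y2" using A[of 1 "n-1"] n4 hl by simp
          then show False using noY3[OF True y(2) y(1) d1(2) yne[symmetric] d1(1) _ a21] by blast
        next
          case False
          then have X1: "ps!1 \<in> X" using inV[OF l(1)] un by blast
          show False
          proof (cases "ps!2 \<in> Y")
            case True
            have "antiadjacent \<theta> y1 (ps!2)" using A[of 0 2] n4 h0 by simp
            then have "antiadjacent \<theta> (ps!2) y1" using antisym True y by blast
            then show False using noY3[OF True y(1) y(2) d1(3) yne d1(4) _ a12] by blast
          next
            case False
            then have X2: "ps!2 \<in> X" using inV[OF l(2)] un by blast
            have "adjacent \<theta> (ps!1) (ps!2)" using P n4 by simp
            then show False using noe X1 X2 by blast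
          qed
        qed
      qed
      have "n = 3" using n2 n3 n4 by simp
      then show "even (length ps - 1)" using n_def by simp
    qed
  qed
  show ?thesis using part1 part2 part3 by blast
qed

end
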